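(* If $t\neq\pm2$ and $n$ are integers, then $h(t)=\left|\coprod_{j=0}^{11}X_{t,n+j}\right|$, where $h(t)$ is the number of equivalence classes of integral binary quadratic forms of discriminant $t^2-4$.
   Context: An integral binary quadratic form is $ax^2+bxy+cy^2$ with $a,b,c\in\mathbb{Z}$, of discriminant $b^2-4ac$; two forms are equivalent if they lie in the same orbit of the $\mathrm{SL}_2(\mathbb{Z})$-action $\left(\begin{bmatrix}\alpha&\beta\\ \gamma&\delta\end{bmatrix}\cdot f\right)(x,y)=f(\alpha x+\beta y,\gamma x+\delta y)$. $B_3=\langle\sigma_1,\sigma_2:\sigma_1\sigma_2\sigma_1=\sigma_2\sigma_1\sigma_2\rangle$; $\phi:B_3\to\mathrm{SL}_2(\mathbb{Z})$ is given by $\phi(\sigma_1)=\begin{bmatrix}1&1\\0&1\end{bmatrix}$, $\phi(\sigma_2)=\begin{bmatrix}1&0\\-1&1\end{bmatrix}$; $\epsilon:B_3\to\mathbb{Z}$ is the exponent sum. $X_{t,n}$ is the set of conjugacy classes of $g\in B_3$ with $\mathrm{tr}(\phi(g))=t$ and $\epsilon(g)=n$. *)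

theory Defs
  imports Main
begin

type_synonym bqf = "int \<times> int \<times> int"

definition qf_eval :: "bqf \<Rightarrow> int \<Rightarrow> int \<Rightarrow> int" where
  "qf_eval f x y = (case f of (a, b, c) \<Rightarrow> a * x^2 + b * x * y + c * y^2)"

definition disc :: "bqf \<Rightarrow> int" where
  "disc f = (case f of (a, b, c) \<Rightarrow> b^2 - 4 * a * c)"

definition qf_equiv :: "bqf \<Rightarrow> bqf \<Rightarrow> bool" where
  "qf_equiv f g \<longleftrightarrow> (\<exists>\<alpha> \<beta> \<gamma> \<delta>. \<alpha> * \<delta> - \<beta> * \<gamma> = 1 \<and>
      (\<forall>x y. qf_eval g x y = qf_eval f (\<alpha> * x + \<beta> * y) (\<gamma> * x + \<delta> * y)))"

definition qf_classes :: "int \<Rightarrow> bqf set set" where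
  "qf_classes D = {f. disc f = D} // {(f, g). qf_equiv f g}"

definition h :: "int \<Rightarrow> nat" where
  "h t = card (qf_classes (t^2 - 4))"

text \<open>A letter (i, s): i = False means sigma_1, i = True means sigma_2;
  s = True means exponent +1, s = False means exponent -1.
  Elements of B_3 are words modulo the congruence generated by free
  cancellation and the braid relation.\<close>
type_synonym letter = "bool \<times> bool"
type_synonym word = "letter list"

definition sig1 :: letter where "sig1 = (False, True)"
definition sig2 :: letter where "sig2 = (True, True)"

definition inv_word :: "word \<Rightarrow> word" where
  "inv_word w = rev (map (\<lambda>(i, s). (i, \<not> s)) w)"

inductive braid_eq :: "word \<Rightarrow> word \<Rightarrow> bool" where
  refl: "braid_eq w w"
| sym: "braid_eq u v \<Longrightarrow> braid_eq v u"
| trans: "braid_eq u v \<Longrightarrow> braid_eq v w \<Longrightarrow> braid_eq u w"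
| cancel: "braid_eq (u @ [(i, s), (i, \<not> s)] @ v) (u @ v)"
| braid: "braid_eq (u @ [sig1, sig2, sig1] @ v) (u @ [sig2, sig1, sig2] @ v)"

definition braid_conj :: "word \<Rightarrow> word \<Rightarrow> bool" where
  "braid_conj w v \<longleftrightarrow> (\<exists>u. braid_eq w (u @ v @ inv_word u))"

definition conj_class :: "word \<Rightarrow> word set" where
  "conj_class v = {w. braid_conj w v}"

text \<open>2x2 integer matrices [[a,b],[c,d]] as quadruples (a,b,c,d).\<close>
type_synonym mat2 = "int \<times> int \<times> int \<times> int"

definition mmult :: "mat2 \<Rightarrow> mat2 \<Rightarrow> mat2" where
  "mmult M N = (case M of (a, b, c, d) \<Rightarrow> case N of (e, f, g, k) \<Rightarrow>
      (a * e + b * g, a * f + b * k, c * e + d * g, c * f + d * k))"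

definition mid :: mat2 where "mid = (1, 0, 0, 1)"

definition mtrace :: "mat2 \<Rightarrow> int" where
  "mtrace M = (case M of (a, b, c, d) \<Rightarrow> a + d)"

definition phi_letter :: "letter \<Rightarrow> mat2" where
  "phi_letter l = (case l of
      (False, True) \<Rightarrow> (1, 1, 0, 1)
    | (False, False) \<Rightarrow> (1, -1, 0, 1)
    | (True, True) \<Rightarrow> (1, 0, -1, 1)
    | (True, False) \<Rightarrow> (1, 0, 1, 1))"

definition phi :: "word \<Rightarrow> mat2" where
  "phi w = foldr (\<lambda>l M. mmult (phi_letter l) M) w mid"

definition eps :: "word \<Rightarrow> int" where
  "eps w = sum_list (map (\<lambda>(i, s). if s then 1 else -1) w)"

definition X :: "int \<Rightarrow> int \<Rightarrow> word set set" where
  "X t n = {conj_class g | g. mtrace (phi g) = t \<and> eps g = n}"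

end

theory Submission
  imports Defs
begin


section \<open>Matrices\<close>

lemma mmult_assoc: "mmult (mmult A B) C = mmult A (mmult B C)"
  by (cases A; cases B; cases C) (simp add: mmult_def algebra_simps)

lemma mmult_mid_left[simp]: "mmult mid A = A"
  by (cases A) (simp add: mmult_def mid_def)

lemma mmult_mid_right[simp]: "mmult A mid = A"
  by (cases A) (simp add: mmult_def mid_def)

lemma phi_Nil[simp]: "phi [] = mid" by (simp add: phi_def)
lemma phi_Cons[simp]: "phi (l # w) = mmult (phi_letter l) (phi w)" by (simp add: phi_def)
lemma phi_append[simp]: "phi (u @ v) = mmult (phi u) (phi v)"
  by (induction u) (simp_all add: mmult_assoc)

definition mdet :: "mat2 \<Rightarrow> int" where
  "mdet M = (case M of (a, b, c, d) \<Rightarrow> a * d - b * c)"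

definition minv :: "mat2 \<Rightarrow> mat2" where
  "minv M = (case M of (a, b, c, d) \<Rightarrow> (d, -b, -c, a))"

lemma mdet_mult: "mdet (mmult A B) = mdet A * mdet B"
  by (cases A; cases B) (simp add: mmult_def mdet_def algebra_simps)

lemma mdet_letter: "mdet (phi_letter l) = 1"
  by (cases l) (auto simp: phi_letter_def mdet_def split: bool.splits)

lemma mdet_mid[simp]: "mdet mid = 1" by (simp add: mdet_def mid_def)
lemma minv_mid[simp]: "minv mid = mid" by (simp add: minv_def mid_def)

lemma mdet_phi: "mdet (phi w) = 1"
  by (induction w) (simp_all add: mdet_mult mdet_letter)

lemma minv_mult: "minv (mmult A B) = mmult (minv B) (minv A)"
  by (cases A; cases B) (simp add: mmult_def minv_def algebra_simps)

lemma mmult_minv: "mdet M = 1 \<Longrightarrow> mmult M (minv M) = mid"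
  by (cases M) (simp add: mmult_def minv_def mid_def mdet_def algebra_simps)

lemma minv_mmult: "mdet M = 1 \<Longrightarrow> mmult (minv M) M = mid"
  by (cases M) (simp add: mmult_def minv_def mid_def mdet_def algebra_simps)

lemma inv_word_Nil[simp]: "inv_word [] = []" by (simp add: inv_word_def)
lemma inv_word_Cons[simp]: "inv_word (l # w) = inv_word w @ [(fst l, \<not> snd l)]"
  by (cases l) (simp add: inv_word_def)
lemma inv_word_append[simp]: "inv_word (u @ v) = inv_word v @ inv_word u"
  by (simp add: inv_word_def)
lemma inv_inv_word[simp]: "inv_word (inv_word w) = w"
  by (induction w) auto

lemma phi_letter_inv: "phi_letter (fst l, \<not> snd l) = minv (phi_letter l)"
  by (cases l) (auto simp: phi_letter_def minv_def split: bool.splits)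

lemma phi_inv_word: "phi (inv_word w) = minv (phi w)"
  by (induction w) (simp_all add: phi_letter_inv minv_mult)

lemma eps_Nil[simp]: "eps [] = 0" by (simp add: eps_def)
lemma eps_Cons[simp]: "eps (l # w) = (if snd l then 1 else -1) + eps w"
  by (cases l) (simp add: eps_def)
lemma eps_append[simp]: "eps (u @ v) = eps u + eps v"
  by (simp add: eps_def)
lemma eps_inv_word[simp]: "eps (inv_word w) = - eps w"
  by (induction w) auto

lemma be_cong: "braid_eq u v \<Longrightarrow> braid_eq (p @ u @ q) (p @ v @ q)"
proof (induction rule: braid_eq.induct)
  case (refl w) show ?case by (rule braid_eq.refl)
next
  case (sym u v) show ?case using sym.IH by (rule braid_eq.sym)
next
  case (trans u v w) then show ?case by (metis braid_eq.trans)
next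
  case (cancel u i s v)
  then show ?case using braid_eq.cancel[of "p @ u" i s "v @ q"] by simp
next
  case (braid u v)
  then show ?case using braid_eq.braid[of "p @ u" "v @ q"] by simp
qed

lemma be_app: "braid_eq u u' \<Longrightarrow> braid_eq v v' \<Longrightarrow> braid_eq (u @ v) (u' @ v')"
  using be_cong[of u u' "[]" v] be_cong[of v v' u' "[]"] braid_eq.trans by auto

lemma be_trans[trans]: "braid_eq u v \<Longrightarrow> braid_eq v w \<Longrightarrow> braid_eq u w"
  by (rule braid_eq.trans)

lemma be_sym: "braid_eq u v \<Longrightarrow> braid_eq v u" by (rule braid_eq.sym)

lemma be_refl[simp]: "braid_eq u u" by (rule braid_eq.refl)

lemma be_eps: "braid_eq u v \<Longrightarrow> eps u = eps v"
  by (induction rule: braid_eq.induct) (auto simp: sig1_def sig2_def)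

lemma be_phi: "braid_eq u v \<Longrightarrow> phi u = phi v"
proof (induction rule: braid_eq.induct)
  case (cancel u i s v)
  have "mmult (phi_letter (i, s)) (phi_letter (i, \<not> s)) = mid"
    by (cases i; cases s) (simp_all add: phi_letter_def mmult_def mid_def)
  then have "phi ((i, s) # (i, \<not> s) # v) = phi v" by (simp add: mmult_assoc[symmetric])
  then show ?case by simp
next
  case (braid u v)
  have "phi [sig1, sig2, sig1] = phi [sig2, sig1, sig2]"
    by (simp add: sig1_def sig2_def phi_letter_def mmult_def mid_def)
  then have "phi (sig1 # sig2 # sig1 # v) = phi (sig2 # sig1 # sig2 # v)"
    by (simp add: mmult_assoc[symmetric])
  then show ?case by simp
qed auto

fun red :: "word \<Rightarrow> word" where
  "red [] = []"
| "red (l # w) = (case red w of [] \<Rightarrow> [l]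
     | (m # r) \<Rightarrow> if fst m = fst l \<and> snd m = (\<not> snd l) then r else l # m # r)"

lemma be_red: "braid_eq w (red w)"
proof (induction w)
  case Nil then show ?case by simp
next
  case (Cons l w)
  have 1: "braid_eq (l # w) (l # red w)" using be_cong[OF Cons, of "[l]" "[]"] by simp
  show ?case
  proof (cases "red w")
    case Nil then show ?thesis using 1 by simp
  next
    case (Cons m r)
    show ?thesis
    proof (cases "fst m = fst l \<and> snd m = (\<not> snd l)")
      case True
      have "braid_eq ([] @ [(fst l, snd l), (fst l, \<not> snd l)] @ r) ([] @ r)"
        by (rule braid_eq.cancel)
      moreover have "(l # m # r) = [] @ [(fst l, snd l), (fst l, \<not> snd l)] @ r"
        using True by (cases l; cases m) simp
      ultimately have "braid_eq (l # m # r) r" by simp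
      moreover have "red (l # w) = r" using Cons True by simp
      ultimately show ?thesis using 1 Cons by (metis be_trans)
    next
      case False
      then have "red (l # w) = l # m # r" using Cons by auto
      then show ?thesis using 1 \<open>red w = m # r\<close> by simp
    qed
  qed
qed

lemma be_by_red: "red u = red v \<Longrightarrow> braid_eq u v"
  by (metis be_red be_sym be_trans)

lemma be_inv_right: "braid_eq (w @ inv_word w) []"
proof (induction w)
  case Nil then show ?case by simp
next
  case (Cons l w)
  have "braid_eq ([l] @ (w @ inv_word w) @ [(fst l, \<not> snd l)]) ([l] @ [] @ [(fst l, \<not> snd l)])"
    by (rule be_cong[OF Cons])
  moreover have "braid_eq [l, (fst l, \<not> snd l)] []"
    by (rule be_by_red) (cases l, simp)
  ultimately show ?case by (auto intro: be_trans)
qed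

lemma be_inv_left: "braid_eq (inv_word w @ w) []"
  using be_inv_right[of "inv_word w"] by simp

lemma be_from_inv: "braid_eq (u @ inv_word v) [] \<Longrightarrow> braid_eq u v"
proof -
  assume a: "braid_eq (u @ inv_word v) []"
  have "braid_eq u (u @ inv_word v @ v)"
    using be_cong[OF be_sym[OF be_inv_left[of v]], of u "[]"] by simp
  also have "braid_eq (u @ inv_word v @ v) v"
    using be_cong[OF a, of "[]" v] by simp
  finally show ?thesis .
qed



definition xw :: word where "xw = [sig1, sig2, sig1]"
definition yw :: word where "yw = [sig1, sig2]"
definition zw :: word where "zw = yw @ yw @ yw"
definition zi :: word where "zi = inv_word zw"

definition central :: "word \<Rightarrow> bool" where
  "central c \<longleftrightarrow> (\<forall>u. braid_eq (c @ u) (u @ c))"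

lemma xx_z: "braid_eq (xw @ xw) zw"
proof -
  have "braid_eq ([sig1, sig2, sig1] @ [sig1, sig2, sig1] @ []) ([sig1, sig2, sig1] @ [sig2, sig1, sig2] @ [])"
    by (rule braid_eq.braid)
  then show ?thesis by (simp add: xw_def zw_def yw_def)
qed

lemma central_letters: "(\<And>l. braid_eq (c @ [l]) ([l] @ c)) \<Longrightarrow> central c"
  unfolding central_def
proof (intro allI)
  fix u assume a: "\<And>l. braid_eq (c @ [l]) ([l] @ c)"
  show "braid_eq (c @ u) (u @ c)"
  proof (induction u)
    case Nil then show ?case by simp
  next
    case (Cons l u)
    have "braid_eq ((c @ [l]) @ u) (([l] @ c) @ u)" using be_cong[OF a[of l], of "[]" u] by simp
    also have "braid_eq (([l] @ c) @ u) ([l] @ (u @ c))" using be_cong[OF Cons, of "[l]" "[]"] by simp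
    finally show ?case by simp
  qed
qed

lemma central_pos_letters:
  assumes "\<And>i. braid_eq (c @ [(i, True)]) ([(i, True)] @ c)"
  shows "central c"
proof (rule central_letters)
  fix l :: letter
  obtain i s where l: "l = (i, s)" by (cases l)
  show "braid_eq (c @ [l]) ([l] @ c)"
  proof (cases s)
    case True then show ?thesis using assms l by simp
  next
    case False
    have c1: "braid_eq [(i, False), (i, True)] []" by (rule be_by_red) simp
    have c2: "braid_eq [(i, True), (i, False)] []" by (rule be_by_red) simp
    have "braid_eq (c @ [l]) ([(i, False), (i, True)] @ c @ [l])"
      using be_cong[OF be_sym[OF c1], of "[]" "c @ [l]"] by simp
    also have "braid_eq ([(i, False), (i, True)] @ c @ [l]) ([(i, False)] @ ([(i, True)] @ c) @ [l])" by simp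
    also have "braid_eq \<dots> ([(i, False)] @ (c @ [(i, True)]) @ [l])"
      by (rule be_cong[OF be_sym[OF assms]])
    also have "braid_eq \<dots> ([(i, False)] @ c @ [(i, True), (i, False)])" using l False by simp
    also have "braid_eq \<dots> ([(i, False)] @ c @ [])" 
      using be_cong[OF c2, of "[(i, False)] @ c" "[]"] by simp
    finally show ?thesis using l False by simp
  qed
qed

lemma central_zw: "central zw"
proof (rule central_pos_letters)
  fix i
  have A: "braid_eq (xw @ [sig1]) ([sig2] @ xw)"
  proof -
    have "braid_eq ([] @ [sig1, sig2, sig1] @ [sig1]) ([] @ [sig2, sig1, sig2] @ [sig1])"
      by (rule braid_eq.braid)
    then show ?thesis by (simp add: xw_def)
  qed
  have B: "braid_eq (xw @ [sig2]) ([sig1] @ xw)"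
  proof -
    have "braid_eq ([sig1] @ [sig1, sig2, sig1] @ []) ([sig1] @ [sig2, sig1, sig2] @ [])"
      by (rule braid_eq.braid)
    then show ?thesis by (simp add: xw_def be_sym)
  qed
  have "braid_eq (zw @ [(i, True)]) (xw @ xw @ [(i, True)])"
    using be_cong[OF be_sym[OF xx_z], of "[]" "[(i, True)]"] by simp
  also have "braid_eq (xw @ xw @ [(i, True)]) ([(i, True)] @ xw @ xw)"
  proof (cases i)
    case True
    have "braid_eq (xw @ (xw @ [sig2])) (xw @ ([sig1] @ xw))" using be_cong[OF B, of xw "[]"] by simp
    also have "braid_eq (xw @ [sig1] @ xw) ([sig2] @ xw @ xw)" using be_cong[OF A, of "[]" xw] by simp
    finally show ?thesis using True by (simp add: sig1_def sig2_def)
  next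
    case False
    have "braid_eq (xw @ (xw @ [sig1])) (xw @ ([sig2] @ xw))" using be_cong[OF A, of xw "[]"] by simp
    also have "braid_eq (xw @ [sig2] @ xw) ([sig1] @ xw @ xw)" using be_cong[OF B, of "[]" xw] by simp
    finally show ?thesis using False by (simp add: sig1_def sig2_def)
  qed
  also have "braid_eq ([(i, True)] @ xw @ xw) ([(i, True)] @ zw)"
    using be_cong[OF xx_z, of "[(i, True)]" "[]"] by simp
  finally show "braid_eq (zw @ [(i, True)]) ([(i, True)] @ zw)" .
qed

lemma central_inv:
  assumes c: "central c" shows "central (inv_word c)"
  unfolding central_def
proof
  fix u
  have "braid_eq (inv_word c @ u) (inv_word c @ u @ (c @ inv_word c))"
    using be_cong[OF be_sym[OF be_inv_right[of c]], of "inv_word c @ u" "[]"] by simp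
  also have "braid_eq \<dots> (inv_word c @ (u @ c) @ inv_word c)" by simp
  also have "braid_eq \<dots> (inv_word c @ (c @ u) @ inv_word c)"
    using c unfolding central_def by (metis be_cong be_sym)
  also have "braid_eq \<dots> ((inv_word c @ c) @ u @ inv_word c)" by simp
  also have "braid_eq \<dots> ([] @ u @ inv_word c)"
    using be_cong[OF be_inv_left[of c], of "[]" "u @ inv_word c"] by simp
  finally show "braid_eq (inv_word c @ u) (u @ inv_word c)" by simp
qed

lemma central_zi: "central zi"
  unfolding zi_def by (rule central_inv[OF central_zw])

lemma central_Nil: "central []" by (simp add: central_def)

lemma central_append: "central a \<Longrightarrow> central b \<Longrightarrow> central (a @ b)"
  unfolding central_def
proof
  fix u assume a: "\<forall>u. braid_eq (a @ u) (u @ a)" and b: "\<forall>u. braid_eq (b @ u) (u @ b)"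
  have "braid_eq (a @ b @ u) (a @ u @ b)" using be_cong[of "b @ u" "u @ b" a "[]"] b by simp
  also have "braid_eq (a @ u @ b) (u @ a @ b)" using be_cong[of "a @ u" "u @ a" "[]" b] a by simp
  finally show "braid_eq ((a @ b) @ u) (u @ a @ b)" by simp
qed

lemma central_rep: "central c \<Longrightarrow> central (concat (replicate n c))"
  by (induction n) (simp_all add: central_Nil central_append)

definition Z :: "int \<Rightarrow> word" where
  "Z k = (if 0 \<le> k then concat (replicate (nat k) zw) else concat (replicate (nat (-k)) zi))"

lemma central_Z: "central (Z k)"
  by (simp add: Z_def central_rep central_zw central_zi)

lemma concat_rep_snoc: "concat (replicate n x) @ x = concat (replicate (Suc n) x)"
  by (induction n) simp_all

lemma zw_zi: "braid_eq (zw @ zi) []" unfolding zi_def by (rule be_inv_right)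
lemma zi_zw: "braid_eq (zi @ zw) []" unfolding zi_def by (rule be_inv_left)

lemma Z_succ: "braid_eq (Z k @ zw) (Z (k + 1))"
proof (cases "0 \<le> k")
  case True
  then have "nat (k + 1) = Suc (nat k)" by simp
  then have "Z (k+1) = concat (replicate (nat k) zw) @ zw" using True
    by (simp add: Z_def concat_rep_snoc del: replicate_Suc)
  then show ?thesis using True by (simp add: Z_def)
next
  case False
  define n where "n = nat (-(k+1))"
  have n: "nat (-k) = Suc n" "nat (-(k+1)) = n" using False by (simp_all add: n_def)
  have "Z k = concat (replicate n zi) @ zi" using False n by (simp add: Z_def concat_rep_snoc del: replicate_Suc)
  moreover have "Z (k + 1) = concat (replicate n zi)"
    using False n by (cases "k + 1 = 0") (auto simp: Z_def)
  ultimately show ?thesis using be_cong[OF zi_zw, of "concat (replicate n zi)" "[]"] by simp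
qed

lemma Z_pred: "braid_eq (Z k @ zi) (Z (k - 1))"
proof (cases "0 < k")
  case False
  then have "nat (-(k - 1)) = Suc (nat (-k))" by simp
  then have "Z (k - 1) = concat (replicate (nat (-k)) zi) @ zi" using False
    by (simp add: Z_def concat_rep_snoc del: replicate_Suc)
  then show ?thesis using False by (simp add: Z_def)
next
  case True
  define n where "n = nat (k - 1)"
  have n: "nat k = Suc n" "nat (k - 1) = n" using True by (simp_all add: n_def)
  have "Z k = concat (replicate n zw) @ zw" using True n by (simp add: Z_def concat_rep_snoc del: replicate_Suc)
  moreover have "Z (k - 1) = concat (replicate n zw)"
    using True n by (auto simp: Z_def)
  ultimately show ?thesis using be_cong[OF zw_zi, of "concat (replicate n zw)" "[]"] by simp
qed



definition yp :: "nat \<Rightarrow> word" where "yp a = concat (replicate a yw)"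
definition xp :: "nat \<Rightarrow> word" where "xp b = concat (replicate b xw)"
definition syl :: "nat \<Rightarrow> word" where "syl e = xw @ yp e"
definition pw :: "nat \<Rightarrow> nat list \<Rightarrow> nat \<Rightarrow> word" where
  "pw a es b = yp a @ concat (map syl es) @ xp b"

type_synonym nfst = "int \<times> nat \<times> nat list \<times> nat"

fun nfw :: "nfst \<Rightarrow> word" where
  "nfw (k, a, es, b) = Z k @ pw a es b"

fun valid :: "nfst \<Rightarrow> bool" where
  "valid (k, a, es, b) \<longleftrightarrow> a < 3 \<and> b < 2 \<and> (\<forall>e\<in>set es. e = 1 \<or> e = 2)"

lemma shift_zw: "braid_eq (Z k @ P @ zw) (Z (k + 1) @ P)"
proof -
  have "braid_eq (Z k @ P @ zw) (Z k @ zw @ P)"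
    using central_zw unfolding central_def by (metis be_cong be_sym append.right_neutral)
  also have "braid_eq (Z k @ zw @ P) (Z (k + 1) @ P)"
    using be_cong[OF Z_succ[of k], of "[]" P] by simp
  finally show ?thesis .
qed

lemma shift_zi: "braid_eq (Z k @ P @ zi) (Z (k - 1) @ P)"
proof -
  have "braid_eq (Z k @ P @ zi) (Z k @ zi @ P)"
    using central_zi unfolding central_def by (metis be_cong be_sym append.right_neutral)
  also have "braid_eq (Z k @ zi @ P) (Z (k - 1) @ P)"
    using be_cong[OF Z_pred[of k], of "[]" P] by simp
  finally show ?thesis .
qed

definition stx :: "nfst \<Rightarrow> nfst" where
  "stx s = (case s of (k, a, es, b) \<Rightarrow> if b = 0 then (k, a, es, 1) else (k + 1, a, es, 0))"

definition sty :: "nfst \<Rightarrow> nfst" where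
  "sty s = (case s of (k, a, es, b) \<Rightarrow>
     if b = 1 then (k, a, es @ [1], 0)
     else if es = [] then (if a < 2 then (k, a + 1, [], 0) else (k + 1, 0, [], 0))
     else if last es = 1 then (k, a, butlast es @ [2], 0) else (k + 1, a, butlast es, 1))"

lemma yp_simps: "yp 0 = []" "yp 1 = yw" "yp 2 = yw @ yw"
  by (simp_all add: yp_def numeral_2_eq_2)
lemma xp_simps: "xp 0 = []" "xp 1 = xw" "xp (Suc 0) = xw" "yp (Suc 0) = yw" "yp (Suc (Suc 0)) = yw @ yw"
  by (simp_all add: xp_def yp_def)

lemma be_stx: "valid s \<Longrightarrow> valid (stx s) \<and> braid_eq (nfw s @ xw) (nfw (stx s))"
proof -
  assume v: "valid s"
  obtain k a es b where s: "s = (k, a, es, b)" by (cases s)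
  have "b = 0 \<or> b = 1" using v s by auto
  then show ?thesis
  proof
    assume b: "b = 0"
    then show ?thesis using v s by (simp add: stx_def pw_def xp_simps)
  next
    assume b: "b = 1"
    have "braid_eq (Z k @ pw a es 0 @ (xw @ xw)) (Z k @ pw a es 0 @ zw)"
      using be_cong[OF xx_z, of "Z k @ pw a es 0" "[]"] by simp
    also have "braid_eq \<dots> (Z (k + 1) @ pw a es 0)" by (rule shift_zw)
    finally show ?thesis using v s b by (simp add: stx_def pw_def xp_simps)
  qed
qed

lemma be_sty: "valid s \<Longrightarrow> valid (sty s) \<and> braid_eq (nfw s @ yw) (nfw (sty s))"
proof -
  assume v: "valid s"
  obtain k a es b where s: "s = (k, a, es, b)" by (cases s)
  have "b = 0 \<or> b = 1" using v s by auto
  then show ?thesis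
  proof
    assume b: "b = 1"
    then show ?thesis using v s by (simp add: sty_def pw_def xp_simps syl_def yp_simps)
  next
    assume b: "b = 0"
    show ?thesis
    proof (cases "es = []")
      case True
      have "a = 0 \<or> a = 1 \<or> a = 2" using v s by auto
      then show ?thesis
      proof (elim disjE)
        assume "a = 0" then show ?thesis using v s b True by (simp add: sty_def pw_def xp_simps yp_simps)
      next
        assume "a = 1" then show ?thesis using v s b True by (simp add: sty_def pw_def xp_simps yp_simps)
      next
        assume a: "a = 2"
        have "braid_eq (Z k @ [] @ zw) (Z (k + 1) @ [])" by (rule shift_zw)
        then show ?thesis using v s b True a by (simp add: sty_def pw_def xp_simps yp_simps zw_def)
      qed
    next
      case False
      then obtain es' e where es: "es = es' @ [e]" by (metis rev_exhaust)
      have "e = 1 \<or> e = 2" using v s es by auto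
      then show ?thesis
      proof
        assume e: "e = 1"
        then show ?thesis using v s b es by (auto simp: sty_def pw_def xp_simps yp_simps syl_def)
      next
        assume e: "e = 2"
        have "braid_eq (Z k @ pw a es' 1 @ zw) (Z (k + 1) @ pw a es' 1)" by (rule shift_zw)
        then show ?thesis using v s b es e
          by (auto simp: sty_def pw_def xp_simps yp_simps syl_def zw_def)
      qed
    qed
  qed
qed

definition tok :: "bool \<Rightarrow> word" where "tok t = (if t then xw else yw)"

lemma append_toks: "valid s \<Longrightarrow> \<exists>s'. valid s' \<and> braid_eq (nfw s @ concat (map tok q)) (nfw s')"
proof (induction q arbitrary: s)
  case Nil then show ?case by (metis append.right_neutral be_refl concat.simps(1) list.simps(8))
next
  case (Cons t q)
  have "\<exists>s1. valid s1 \<and> braid_eq (nfw s @ tok t) (nfw s1)"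
  proof (cases t)
    case True then show ?thesis using be_stx[OF Cons.prems] unfolding tok_def
      by (intro exI[of _ "stx s"]) (simp del: valid.simps)
  next
    case False then show ?thesis using be_sty[OF Cons.prems] unfolding tok_def
      by (intro exI[of _ "sty s"]) (simp del: valid.simps)
  qed
  then obtain s1 where s1: "valid s1" "braid_eq (nfw s @ tok t) (nfw s1)" by blast
  obtain s' where s': "valid s'" "braid_eq (nfw s1 @ concat (map tok q)) (nfw s')"
    using Cons.IH[OF s1(1)] by blast
  have "braid_eq (nfw s @ tok t @ concat (map tok q)) (nfw s1 @ concat (map tok q))"
    using be_cong[OF s1(2), of "[]" "concat (map tok q)"] by simp
  then have "braid_eq (nfw s @ concat (map tok (t # q))) (nfw s')"
    using s'(2) be_trans by simp
  then show ?case using s'(1) by blast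
qed

lemma letter_tok: "\<exists>q. braid_eq [l] (zi @ concat (map tok q))"
proof -
  obtain i s where l: "l = (i, s)" by (cases l)
  have xxz: "braid_eq (zi @ xw @ xw) []"
    using be_trans[OF be_cong[OF xx_z, of zi "[]"]] zi_zw by simp
  show ?thesis
  proof (cases i; cases s)
    assume "\<not> i" "s"
    have "braid_eq [l] (zi @ concat (map tok [False, False, True]))"
      apply (rule be_sym, rule be_from_inv, rule be_by_red)
      using \<open>\<not> i\<close> \<open>s\<close> l by (simp add: tok_def xw_def yw_def zi_def zw_def sig1_def sig2_def)
    then show ?thesis by blast
  next
    assume "\<not> i" "\<not> s"
    have "braid_eq (zi @ concat (map tok [True, False]) @ inv_word [l]) (zi @ xw @ xw)"
      apply (rule be_by_red)
      using \<open>\<not> i\<close> \<open>\<not> s\<close> l by (simp add: tok_def xw_def yw_def zi_def zw_def sig1_def sig2_def)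
    then have "braid_eq [l] (zi @ concat (map tok [True, False]))"
      using xxz by (metis append_assoc be_from_inv be_sym be_trans)
    then show ?thesis by blast
  next
    assume "i" "s"
    have "braid_eq (zi @ concat (map tok [True, False, False]) @ inv_word [l]) (zi @ xw @ xw)"
      apply (rule be_by_red)
      using \<open>i\<close> \<open>s\<close> l by (simp add: tok_def xw_def yw_def zi_def zw_def sig1_def sig2_def)
    then have "braid_eq [l] (zi @ concat (map tok [True, False, False]))"
      using xxz by (metis append_assoc be_from_inv be_sym be_trans)
    then show ?thesis by blast
  next
    assume "i" "\<not> s"
    have "braid_eq [l] (zi @ concat (map tok [False, True]))"
      apply (rule be_sym, rule be_from_inv, rule be_by_red)
      using \<open>i\<close> \<open>\<not> s\<close> l by (simp add: tok_def xw_def yw_def zi_def zw_def sig1_def sig2_def)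
    then show ?thesis by blast
  qed
qed

theorem normal_form: "\<exists>s. valid s \<and> braid_eq w (nfw s)"
proof (induction w rule: rev_induct)
  case Nil
  have "valid (0, 0, [], 0) \<and> braid_eq [] (nfw (0, 0, [], 0))"
    by (simp add: Z_def pw_def yp_def xp_def)
  then show ?case by blast
next
  case (snoc l w)
  obtain s where s: "valid s" "braid_eq w (nfw s)" using snoc by blast
  obtain k a es b where sd: "s = (k, a, es, b)" by (cases s)
  obtain q where q: "braid_eq [l] (zi @ concat (map tok q))" using letter_tok by blast
  have "braid_eq (w @ [l]) (nfw s @ zi @ concat (map tok q))"
    using be_app[OF s(2) q] .
  also have "braid_eq (nfw s @ zi @ concat (map tok q)) (nfw (k - 1, a, es, b) @ concat (map tok q))"
    using be_cong[OF shift_zi[of k "pw a es b"], of "[]" "concat (map tok q)"] sd by simp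
  finally have 1: "braid_eq (w @ [l]) (nfw (k - 1, a, es, b) @ concat (map tok q))" .
  have "valid (k - 1, a, es, b)" using s sd by simp
  from append_toks[OF this, of q] obtain s' where "valid s'"
    "braid_eq (nfw (k - 1, a, es, b) @ concat (map tok q)) (nfw s')" by blast
  with 1 show ?case by (blast intro: be_trans)
qed



definition msc :: "int \<Rightarrow> mat2" where "msc c = (c, 0, 0, c)"

lemma phi_zw: "phi zw = msc (-1)"
  by (simp add: zw_def yw_def sig1_def sig2_def phi_letter_def mmult_def mid_def msc_def)
lemma phi_zi: "phi zi = msc (-1)"
  by (simp add: zi_def phi_inv_word phi_zw minv_def msc_def)

lemma phi_rep: "phi c = msc (-1) \<Longrightarrow> phi (concat (replicate n c)) = msc ((-1) ^ n)"
  by (induction n) (simp_all add: msc_def mid_def mmult_def)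

lemma phi_Z: "phi (Z k) = msc (if even k then 1 else -1)"
proof (cases "0 \<le> k")
  case True
  have "even (nat k) = even k" using True by (simp add: even_nat_iff)
  then show ?thesis using True by (simp add: Z_def phi_rep phi_zw)
next
  case False
  have "even (nat (-k)) = even k" using False by (simp add: even_nat_iff)
  then show ?thesis using False by (simp add: Z_def phi_rep phi_zi)
qed

lemma eps_rep: "eps (concat (replicate n c)) = int n * eps c"
  by (induction n) (simp_all add: algebra_simps)

lemma eps_Z: "eps (Z k) = 6 * k"
proof -
  have ez: "eps zw = 6" by (simp add: zw_def yw_def sig1_def sig2_def)
  have ei: "eps zi = -6" by (simp add: zi_def ez)
  show ?thesis by (simp add: Z_def eps_rep ez ei)
qed

definition posm :: "mat2 \<Rightarrow> bool" where
  "posm M \<longleftrightarrow> (\<exists>\<sigma> a b c d. (\<sigma> = 1 \<or> \<sigma> = -1) \<and> M = (\<sigma> * a, - \<sigma> * b, - \<sigma> * c, \<sigma> * d) \<and>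
      a \<ge> 1 \<and> d \<ge> 1 \<and> b \<ge> 0 \<and> c \<ge> 0 \<and> b + c \<ge> 1)"

lemma phi_syl1: "phi (syl (Suc 0)) = (-1, 1, 0, -1)"
  by (simp add: syl_def xw_def yw_def yp_def sig1_def sig2_def phi_letter_def mmult_def mid_def)
lemma phi_syl2: "phi (syl 2) = (-1, 0, 1, -1)"
  by (simp add: syl_def xw_def yw_def yp_def sig1_def sig2_def phi_letter_def mmult_def mid_def numeral_2_eq_2)

lemma posm_syls: "es \<noteq> [] \<Longrightarrow> (\<forall>e\<in>set es. e = 1 \<or> e = 2) \<Longrightarrow> posm (phi (concat (map syl es)))"
proof (induction es)
  case Nil then show ?case by simp
next
  case (Cons e es)
  have e: "e = 1 \<or> e = 2" using Cons.prems by simp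
  show ?case
  proof (cases "es = []")
    case True
    then show ?thesis using e
    proof (elim disjE)
      assume "e = 1" then show ?thesis using True unfolding posm_def
        by (intro exI[of _ "-1"] exI[of _ 1] exI[of _ 1] exI[of _ 0] exI[of _ 1]) (simp add: phi_syl1)
    next
      assume "e = 2" then show ?thesis using True unfolding posm_def
        by (intro exI[of _ "-1"] exI[of _ 1] exI[of _ 0] exI[of _ 1] exI[of _ 1]) (simp add: phi_syl2)
    qed
  next
    case False
    then have "posm (phi (concat (map syl es)))" using Cons by simp
    then obtain \<sigma> a b c d where w: "\<sigma> = 1 \<or> \<sigma> = -1" "phi (concat (map syl es)) = (\<sigma> * a, - \<sigma> * b, - \<sigma> * c, \<sigma> * d)"
      "a \<ge> 1" "d \<ge> 1" "b \<ge> 0" "c \<ge> 0" "b + c \<ge> 1" unfolding posm_def by blast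
    from e show ?thesis
    proof (elim disjE)
      assume "e = 1" then show ?thesis using w unfolding posm_def
        by (intro exI[of _ "-\<sigma>"] exI[of _ "a + c"] exI[of _ "b + d"] exI[of _ c] exI[of _ d])
          (auto simp: phi_syl1 mmult_def algebra_simps)
    next
      assume "e = 2" then show ?thesis using w unfolding posm_def
        by (intro exI[of _ "-\<sigma>"] exI[of _ a] exI[of _ b] exI[of _ "a + c"] exI[of _ "b + d"])
          (auto simp: phi_syl2 mmult_def algebra_simps)
    qed
  qed
qed

lemma phi_yp: "phi (yp 0) = mid" "phi (yp (Suc 0)) = (0, 1, -1, 1)" "phi (yp 2) = (-1, 1, -1, 0)"
  by (simp_all add: yp_def yw_def sig1_def sig2_def phi_letter_def mmult_def mid_def numeral_2_eq_2)
lemma phi_xp: "phi (xp 0) = mid" "phi (xp (Suc 0)) = (0, 1, -1, 0)"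
  by (simp_all add: xp_def xw_def sig1_def sig2_def phi_letter_def mmult_def mid_def)

lemma pw_trivial:
  assumes v: "valid (k, a, es, b)" and c: "c = 1 \<or> c = -1" and p: "phi (pw a es b) = msc c"
  shows "a = 0 \<and> es = [] \<and> b = 0"
proof -
  have a: "a = 0 \<or> a = 1 \<or> a = 2" and b: "b = 0 \<or> b = 1" using v by auto
  have pe: "phi (pw a es b) = mmult (phi (yp a)) (mmult (phi (concat (map syl es))) (phi (xp b)))"
    by (simp add: pw_def)
  show ?thesis
  proof (cases "es = []")
    case True
    then show ?thesis using a b c p pe
      by (elim disjE) (simp_all add: phi_yp phi_xp mmult_def mid_def msc_def)
  next
    case False
    then have "posm (phi (concat (map syl es)))" using v posm_syls by simp
    then obtain \<sigma> a' b' c' d' where w: "\<sigma> = 1 \<or> \<sigma> = -1" "phi (concat (map syl es)) = (\<sigma> * a', - \<sigma> * b', - \<sigma> * c', \<sigma> * d')"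
      "a' \<ge> 1" "d' \<ge> 1" "b' \<ge> 0" "c' \<ge> 0" "b' + c' \<ge> 1" unfolding posm_def by blast
    have False using a b c w(1) p pe
      apply (elim disjE)
      apply (simp_all add: phi_yp phi_xp mmult_def mid_def msc_def w(2))
      using w(3-7) by arith+
    then show ?thesis ..
  qed
qed

lemma kernel: assumes "phi w = mid" shows "\<exists>m. braid_eq w (Z (2 * m))"
proof -
  obtain s where s: "valid s" "braid_eq w (nfw s)" using normal_form by blast
  obtain k a es b where sd: "s = (k, a, es, b)" by (cases s)
  define c :: int where "c = (if even k then 1 else -1)"
  have "mid = phi (nfw s)" using be_phi[OF s(2)] assms by simp
  also have "\<dots> = mmult (msc c) (phi (pw a es b))" by (simp add: sd phi_Z c_def)
  finally have m: "mmult (msc c) (phi (pw a es b)) = mid" ..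
  have c: "c = 1 \<or> c = -1" by (simp add: c_def)
  have "phi (pw a es b) = msc c"
  proof -
    obtain p1 p2 p3 p4 where "phi (pw a es b) = (p1, p2, p3, p4)" by (cases "phi (pw a es b)")
    then show ?thesis using m c by (auto simp: mmult_def msc_def mid_def)
  qed
  from pw_trivial[OF s(1)[unfolded sd] c this] have t: "a = 0" "es = []" "b = 0" by auto
  then have "phi (pw a es b) = mid" by (simp add: pw_def yp_def xp_def)
  with m have "c = 1" by (simp add: mmult_def msc_def mid_def)
  then have "even k" by (simp add: c_def split: if_splits)
  then obtain m where "k = 2 * m" by (auto elim: evenE)
  moreover have "nfw s = Z k" using t sd by (simp add: pw_def yp_def xp_def)
  ultimately show ?thesis using s(2) by auto
qed

lemma phi_eq:
  assumes "phi u = phi v"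
  shows "12 dvd (eps u - eps v) \<and> (eps u = eps v \<longrightarrow> braid_eq u v)"
proof -
  have "phi (u @ inv_word v) = mid"
    using assms by (simp add: phi_inv_word mmult_minv mdet_phi)
  then obtain m where m: "braid_eq (u @ inv_word v) (Z (2 * m))" using kernel by blast
  have e: "eps u - eps v = 12 * m" using be_eps[OF m] by (simp add: eps_Z)
  show ?thesis
  proof
    show "12 dvd (eps u - eps v)" using e by simp
    show "eps u = eps v \<longrightarrow> braid_eq u v"
    proof
      assume "eps u = eps v"
      then have "m = 0" using e by simp
      then have "braid_eq (u @ inv_word v) []" using m by (simp add: Z_def)
      then show "braid_eq u v" by (rule be_from_inv)
    qed
  qed
qed



section \<open>Surjectivity of phi\<close>

definition tpow :: "int \<Rightarrow> word" where
  "tpow k = (if 0 \<le> k then replicate (nat k) sig1 else replicate (nat (-k)) (False, False))"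

lemma phi_rep_sig1: "phi (replicate n sig1) = (1, int n, 0, 1)"
  by (induction n) (simp_all add: sig1_def phi_letter_def mmult_def mid_def)
lemma phi_rep_sig1i: "phi (replicate n (False, False)) = (1, - int n, 0, 1)"
  by (induction n) (simp_all add: phi_letter_def mmult_def mid_def)

lemma phi_tpow: "phi (tpow k) = (1, k, 0, 1)"
  by (simp add: tpow_def phi_rep_sig1 phi_rep_sig1i)

lemma surj_c0: assumes "mdet (a, b, 0, d) = 1" shows "\<exists>w. phi w = (a, b, 0, d)"
proof -
  have "a * d = 1" using assms by (simp add: mdet_def)
  then have "(a = 1 \<and> d = 1) \<or> (a = -1 \<and> d = -1)" by (simp add: zmult_eq_1_iff)
  then show ?thesis
  proof
    assume "a = 1 \<and> d = 1" then show ?thesis using phi_tpow[of b] by auto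
  next
    assume "a = -1 \<and> d = -1"
    then have "phi (zw @ tpow (-b)) = (a, b, 0, d)"
      by (simp add: phi_zw phi_tpow msc_def mmult_def)
    then show ?thesis by blast
  qed
qed

lemma phi_xw: "phi xw = (0, 1, -1, 0)"
  by (simp add: xw_def sig1_def sig2_def phi_letter_def mmult_def mid_def)

lemma surj_a0: assumes "mdet (0, b, c, d) = 1" shows "\<exists>w. phi w = (0, b, c, d)"
proof -
  have "mdet (c, d, 0, -b) = 1" using assms by (simp add: mdet_def algebra_simps)
  then obtain w where w: "phi w = (c, d, 0, -b)" using surj_c0 by blast
  have "phi (xw @ xw @ xw @ w) = (0, b, c, d)"
    by (simp add: phi_xw w mmult_def)
  then show ?thesis by blast
qed

lemma phi_surj_aux:
  "\<forall>a b c d. mdet (a, b, c, d) = 1 \<longrightarrow> nat (\<bar>a\<bar> + \<bar>c\<bar>) = n \<longrightarrow> (\<exists>w. phi w = (a, b, c, d))"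
proof (induction n rule: less_induct)
  case (less n)
  show ?case
  proof (intro allI impI)
    fix a b c d assume det: "mdet (a, b, c, d) = 1" and n: "nat (\<bar>a\<bar> + \<bar>c\<bar>) = n"
    show "\<exists>w. phi w = (a, b, c, d)"
    proof (cases "c = 0")
      case True then show ?thesis using surj_c0 det by simp
    next
      case c0: False
      show ?thesis
      proof (cases "a = 0")
        case True then show ?thesis using surj_a0 det by simp
      next
        case a0: False
        show ?thesis
        proof (cases "\<bar>c\<bar> \<le> \<bar>a\<bar>")
          case True
          show ?thesis
          proof (cases "(0 < a) = (0 < c)")
            case True
            have "nat (\<bar>a - c\<bar> + \<bar>c\<bar>) < n" using n \<open>\<bar>c\<bar> \<le> \<bar>a\<bar>\<close> True a0 c0 by (auto simp: abs_if)
            moreover have "mdet (a - c, b - d, c, d) = 1" using det by (simp add: mdet_def algebra_simps)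
            ultimately obtain w where w: "phi w = (a - c, b - d, c, d)" using less by blast
            have "phi (sig1 # w) = (a, b, c, d)" by (simp add: w sig1_def phi_letter_def mmult_def)
            then show ?thesis by blast
          next
            case False
            have "nat (\<bar>a + c\<bar> + \<bar>c\<bar>) < n" using n \<open>\<bar>c\<bar> \<le> \<bar>a\<bar>\<close> False a0 c0 by (auto simp: abs_if)
            moreover have "mdet (a + c, b + d, c, d) = 1" using det by (simp add: mdet_def algebra_simps)
            ultimately obtain w where w: "phi w = (a + c, b + d, c, d)" using less by blast
            have "phi ((False, False) # w) = (a, b, c, d)" by (simp add: w phi_letter_def mmult_def)
            then show ?thesis by blast
          qed
        next
          case False
          show ?thesis
          proof (cases "(0 < a) = (0 < c)")
            case True
            have "nat (\<bar>a\<bar> + \<bar>c - a\<bar>) < n" using n \<open>\<not> \<bar>c\<bar> \<le> \<bar>a\<bar>\<close> True a0 c0 by (auto simp: abs_if)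
            moreover have "mdet (a, b, c - a, d - b) = 1" using det by (simp add: mdet_def algebra_simps)
            ultimately obtain w where w: "phi w = (a, b, c - a, d - b)" using less by blast
            have "phi ((True, False) # w) = (a, b, c, d)" by (simp add: w phi_letter_def mmult_def)
            then show ?thesis by blast
          next
            case False
            have "nat (\<bar>a\<bar> + \<bar>c + a\<bar>) < n" using n \<open>\<not> \<bar>c\<bar> \<le> \<bar>a\<bar>\<close> False a0 c0 by (auto simp: abs_if)
            moreover have "mdet (a, b, c + a, d + b) = 1" using det by (simp add: mdet_def algebra_simps)
            ultimately obtain w where w: "phi w = (a, b, c + a, d + b)" using less by blast
            have "phi (sig2 # w) = (a, b, c, d)" by (simp add: w sig2_def phi_letter_def mmult_def)
            then show ?thesis by blast
          qed
        qed
      qed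
    qed
  qed
qed

lemma phi_surj: "mdet M = 1 \<Longrightarrow> \<exists>w. phi w = M"
  using phi_surj_aux by (cases M) blast

section \<open>Forms\<close>

definition fm :: "mat2 \<Rightarrow> bqf" where
  "fm M = (case M of (a, b, c, d) \<Rightarrow> (c, d - a, - b))"

definition act :: "mat2 \<Rightarrow> bqf \<Rightarrow> bqf" where
  "act Q f = (case Q of (\<alpha>, \<beta>, \<gamma>, \<delta>) \<Rightarrow> case f of (a, b, c) \<Rightarrow>
     (a * \<alpha>^2 + b * \<alpha> * \<gamma> + c * \<gamma>^2,
      2 * a * \<alpha> * \<beta> + b * (\<alpha> * \<delta> + \<beta> * \<gamma>) + 2 * c * \<gamma> * \<delta>,
      a * \<beta>^2 + b * \<beta> * \<delta> + c * \<delta>^2))"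

lemma eval_act: "qf_eval f (\<alpha> * x + \<beta> * y) (\<gamma> * x + \<delta> * y) = qf_eval (act (\<alpha>, \<beta>, \<gamma>, \<delta>) f) x y"
  by (cases f) (simp add: qf_eval_def act_def power2_eq_square algebra_simps)

lemma eval_determines: "(\<forall>x y. qf_eval f x y = qf_eval g x y) \<Longrightarrow> f = g"
proof -
  assume e: "\<forall>x y. qf_eval f x y = qf_eval g x y"
  obtain a b c where f: "f = (a, b, c)" by (cases f)
  obtain a' b' c' where g: "g = (a', b', c')" by (cases g)
  have "qf_eval f 1 0 = qf_eval g 1 0" "qf_eval f 0 1 = qf_eval g 0 1" "qf_eval f 1 1 = qf_eval g 1 1"
    using e by auto
  then show "f = g" by (simp add: f g qf_eval_def)
qed

lemma qf_equiv_act: "qf_equiv f g \<longleftrightarrow> (\<exists>Q. mdet Q = 1 \<and> g = act Q f)"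
proof
  assume "qf_equiv f g"
  then obtain \<alpha> \<beta> \<gamma> \<delta> where d: "\<alpha> * \<delta> - \<beta> * \<gamma> = 1"
    and e: "\<forall>x y. qf_eval g x y = qf_eval f (\<alpha> * x + \<beta> * y) (\<gamma> * x + \<delta> * y)"
    unfolding qf_equiv_def by blast
  have "g = act (\<alpha>, \<beta>, \<gamma>, \<delta>) f" using e by (intro eval_determines) (simp add: eval_act)
  then show "\<exists>Q. mdet Q = 1 \<and> g = act Q f" using d by (intro exI[of _ "(\<alpha>, \<beta>, \<gamma>, \<delta>)"]) (simp add: mdet_def)
next
  assume "\<exists>Q. mdet Q = 1 \<and> g = act Q f"
  then obtain \<alpha> \<beta> \<gamma> \<delta> where "mdet (\<alpha>, \<beta>, \<gamma>, \<delta>) = 1" "g = act (\<alpha>, \<beta>, \<gamma>, \<delta>) f" by auto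
  then show "qf_equiv f g" unfolding qf_equiv_def
    by (intro exI[of _ \<alpha>] exI[of _ \<beta>] exI[of _ \<gamma>] exI[of _ \<delta>]) (simp add: mdet_def eval_act)
qed

lemma act_mult: "act (mmult P Q) f = act Q (act P f)"
  by (cases P; cases Q; cases f) (simp add: act_def mmult_def power2_eq_square algebra_simps)

lemma act_mid: "act mid f = f"
  by (cases f) (simp add: act_def mid_def)

lemma disc_act: "disc (act Q f) = (mdet Q)^2 * disc f"
  by (cases Q; cases f) (simp add: act_def disc_def mdet_def power2_eq_square algebra_simps)

lemma qf_equiv_refl: "qf_equiv f f"
  unfolding qf_equiv_act by (intro exI[of _ mid]) (simp add: act_mid)

lemma qf_equiv_sym: "qf_equiv f g \<Longrightarrow> qf_equiv g f"
  unfolding qf_equiv_act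
proof (elim exE conjE)
  fix Q assume "mdet Q = 1" "g = act Q f"
  then show "\<exists>Q. mdet Q = 1 \<and> f = act Q g"
    by (intro exI[of _ "minv Q"])
      (simp add: act_mult[symmetric] mmult_minv act_mid, cases Q, simp add: mdet_def minv_def algebra_simps)
qed

lemma qf_equiv_trans: "qf_equiv f g \<Longrightarrow> qf_equiv g k \<Longrightarrow> qf_equiv f k"
  unfolding qf_equiv_act
proof (elim exE conjE)
  fix Q R assume "mdet Q = 1" "g = act Q f" "mdet R = 1" "k = act R g"
  then show "\<exists>Q. mdet Q = 1 \<and> k = act Q f"
    by (intro exI[of _ "mmult Q R"]) (simp add: act_mult mdet_mult)
qed

lemma qf_equiv_disc: "qf_equiv f g \<Longrightarrow> disc g = disc f"
  unfolding qf_equiv_act by (auto simp: disc_act)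

lemma equiv_R: "equiv UNIV {(f, g). qf_equiv f g}"
  unfolding equiv_def refl_on_def sym_def trans_def
  using qf_equiv_refl qf_equiv_sym qf_equiv_trans by blast

lemma disc_fm: "mdet M = 1 \<Longrightarrow> disc (fm M) = (mtrace M)^2 - 4"
  by (cases M) (simp add: fm_def disc_def mdet_def mtrace_def power2_eq_square algebra_simps)

lemma act_fm: "act Q (fm M) = fm (mmult (minv Q) (mmult M Q))"
  by (cases Q; cases M) (simp add: act_def fm_def minv_def mmult_def power2_eq_square algebra_simps)

lemma mtrace_conj: "mdet Q = 1 \<Longrightarrow> mtrace (mmult (minv Q) (mmult M Q)) = mtrace M"
proof -
  assume q: "mdet Q = 1"
  obtain a b c d where Q: "Q = (a, b, c, d)" by (cases Q)
  obtain e f g k where M: "M = (e, f, g, k)" by (cases M)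
  have "a * d - b * c = 1" using q Q by (simp add: mdet_def)
  then show ?thesis unfolding Q M mtrace_def minv_def mmult_def by simp algebra
qed

lemma fm_inj: "fm M = fm N \<Longrightarrow> mtrace M = mtrace N \<Longrightarrow> M = N"
  by (cases M; cases N) (simp add: fm_def mtrace_def)



section \<open>Finiteness of the class number\<close>

lemma nonsquare:
  fixes t s :: int
  assumes "t \<noteq> 2" "t \<noteq> -2"
  shows "t^2 - 4 \<noteq> s^2"
proof
  assume e: "t^2 - 4 = s^2"
  define u where "u = \<bar>t\<bar>"
  define v where "v = \<bar>s\<bar>"
  have u0: "u \<ge> 0" and v0: "v \<ge> 0" by (simp_all add: u_def v_def)
  have e2: "u * u = v * v + 4" using e by (simp add: u_def v_def power2_eq_square[symmetric])
  have "v < u"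
  proof (rule ccontr)
    assume "\<not> v < u"
    then have "u * u \<le> v * v" using u0 v0 by (simp add: mult_mono)
    with e2 show False by simp
  qed
  then have "v + 1 \<le> u" by simp
  then have "(v + 1) * (v + 1) \<le> u * u" using v0 by (simp add: mult_mono)
  then have "v \<le> 1" using e2 by (simp add: algebra_simps)
  then have "v * v \<le> 1" using v0 by (simp add: mult_le_one)
  then have uu: "u * u \<le> 5" "u * u \<ge> 4" using e2 v0 by simp_all
  have "u \<le> 2"
  proof (rule ccontr)
    assume "\<not> u \<le> 2"
    then have "3 * 3 \<le> u * u" using mult_mono[of 3 u 3 u] by simp
    with uu show False by simp
  qed
  moreover have "u \<ge> 2"
  proof (rule ccontr)
    assume "\<not> u \<ge> 2"
    then have "u * u \<le> 1 * 1" using u0 mult_mono[of u 1 u 1] by simp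
    with uu show False by simp
  qed
  ultimately have "u = 2" by simp
  then show False using assms by (simp add: u_def abs_if split: if_splits)
qed

definition reduced :: "bqf \<Rightarrow> bool" where
  "reduced f = (case f of (a, b, c) \<Rightarrow> \<bar>b\<bar> \<le> \<bar>a\<bar> \<and> \<bar>a\<bar> \<le> \<bar>c\<bar>)"

lemma a_nonzero: "\<forall>s. D \<noteq> s^2 \<Longrightarrow> disc (a, b, c) = D \<Longrightarrow> a \<noteq> 0"
  by (auto simp: disc_def)

lemma reduced_bound:
  assumes ns: "\<forall>s. D \<noteq> s^2" and d: "disc (a, b, c) = D" and r: "\<bar>b\<bar> \<le> \<bar>a\<bar>" "\<bar>a\<bar> \<le> \<bar>c\<bar>"
  shows "\<bar>a\<bar> \<le> \<bar>D\<bar> \<and> \<bar>b\<bar> \<le> \<bar>D\<bar> \<and> \<bar>c\<bar> \<le> \<bar>D\<bar>"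
proof -
  have a0: "a \<noteq> 0" using a_nonzero[OF ns d] .
  have D: "D = b * b - 4 * (a * c)" using d by (simp add: disc_def power2_eq_square)
  have a1: "\<bar>a\<bar> \<ge> 1" using a0 by simp
  have bb: "b * b \<le> \<bar>a\<bar> * \<bar>c\<bar>"
  proof -
    have "b * b = \<bar>b\<bar> * \<bar>b\<bar>" by (simp add: abs_mult[symmetric])
    also have "\<dots> \<le> \<bar>a\<bar> * \<bar>a\<bar>" using r by (intro mult_mono) simp_all
    also have "\<dots> \<le> \<bar>a\<bar> * \<bar>c\<bar>" using r by (intro mult_left_mono) simp_all
    finally show ?thesis .
  qed
  have cc: "\<bar>c\<bar> \<le> \<bar>a\<bar> * \<bar>c\<bar>" using a1 by (simp add: mult_right_mono[of 1 "\<bar>a\<bar>" "\<bar>c\<bar>", simplified])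
  have b0: "b * b \<ge> 0" by simp
  have P: "\<bar>a * c\<bar> = \<bar>a\<bar> * \<bar>c\<bar>" by (simp add: abs_mult)
  have "\<bar>c\<bar> \<le> \<bar>D\<bar>"
  proof (cases "a * c \<ge> 0")
    case True
    then have "a * c = \<bar>a\<bar> * \<bar>c\<bar>" using P by simp
    then show ?thesis using D bb cc b0 by arith
  next
    case False
    then have "a * c = - (\<bar>a\<bar> * \<bar>c\<bar>)" using P by simp
    then show ?thesis using D bb cc b0 by arith
  qed
  then show ?thesis using r by simp
qed

lemma reduce_aux:
  assumes ns: "\<forall>s. D \<noteq> s^2"
  shows "\<forall>a b c. nat \<bar>a\<bar> = N \<longrightarrow> disc (a, b, c) = D \<longrightarrow> (\<exists>g. qf_equiv (a, b, c) g \<and> reduced g)"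
proof (induction N rule: less_induct)
  case (less N)
  show ?case
  proof (intro allI impI)
    fix a b c assume N: "nat \<bar>a\<bar> = N" and d: "disc (a, b, c) = D"
    have a0: "a \<noteq> 0" using a_nonzero[OF ns d] .
    define m where "m = 2 * \<bar>a\<bar>"
    define q where "q = (b + \<bar>a\<bar>) div m"
    define r where "r = (b + \<bar>a\<bar>) mod m"
    have m0: "m > 0" using a0 by (simp add: m_def)
    have r: "0 \<le> r" "r < m" using m0 by (simp_all add: r_def)
    have br: "b + \<bar>a\<bar> = m * q + r" by (simp add: q_def r_def)
    define k where "k = (if a > 0 then - q else q)"
    define b1 where "b1 = b + 2 * a * k"
    define c1 where "c1 = a * k^2 + b * k + c"
    have b1: "b1 = r - \<bar>a\<bar>" using br a0 by (auto simp: b1_def k_def m_def abs_if algebra_simps)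
    have b1a: "\<bar>b1\<bar> \<le> \<bar>a\<bar>" using b1 r by (simp add: m_def)
    have f1: "act (1, k, 0, 1) (a, b, c) = (a, b1, c1)"
      by (simp add: act_def b1_def c1_def power2_eq_square algebra_simps)
    have e1: "qf_equiv (a, b, c) (a, b1, c1)"
      unfolding qf_equiv_act by (intro exI[of _ "(1, k, 0, 1)"]) (simp add: f1 mdet_def)
    have d1: "disc (a, b1, c1) = D" using qf_equiv_disc[OF e1] d by simp
    show "\<exists>g. qf_equiv (a, b, c) g \<and> reduced g"
    proof (cases "\<bar>a\<bar> \<le> \<bar>c1\<bar>")
      case True
      then show ?thesis using e1 b1a by (intro exI[of _ "(a, b1, c1)"]) (simp add: reduced_def)
    next
      case False
      have f2: "act (0, -1, 1, 0) (a, b1, c1) = (c1, - b1, a)"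
        by (simp add: act_def power2_eq_square)
      have e2: "qf_equiv (a, b1, c1) (c1, - b1, a)"
        unfolding qf_equiv_act by (intro exI[of _ "(0, -1, 1, 0)"]) (simp add: f2 mdet_def)
      have d2: "disc (c1, - b1, a) = D" using qf_equiv_disc[OF e2] d1 by simp
      have "nat \<bar>c1\<bar> < N" using False N by simp
      then obtain g where "qf_equiv (c1, - b1, a) g" "reduced g" using less d2 by blast
      then show ?thesis using e1 e2 qf_equiv_trans by blast
    qed
  qed
qed

lemma reduce:
  assumes ns: "\<forall>s. D \<noteq> s^2" and d: "disc f = D"
  shows "\<exists>g. qf_equiv f g \<and> reduced g"
  using reduce_aux[OF ns] d by (cases f) blast

lemma finite_classes:
  assumes ns: "\<forall>s. D \<noteq> s^2"
  shows "finite (qf_classes D)"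
proof -
  define R where "R = {(f, g). qf_equiv f g}"
  define N where "N = \<bar>D\<bar>"
  define B where "B = {-N..N} \<times> {-N..N} \<times> {-N..N}"
  have "qf_classes D \<subseteq> (\<lambda>f. R `` {f}) ` B"
  proof
    fix x assume "x \<in> qf_classes D"
    then obtain f where f: "disc f = D" "x = R `` {f}"
      unfolding qf_classes_def R_def by (auto elim: quotientE)
    obtain g where g: "qf_equiv f g" "reduced g" using reduce[OF ns f(1)] by blast
    obtain a b c where gd: "g = (a, b, c)" by (cases g)
    have dg: "disc (a, b, c) = D" using qf_equiv_disc[OF g(1)] f gd by simp
    have "\<bar>a\<bar> \<le> N \<and> \<bar>b\<bar> \<le> N \<and> \<bar>c\<bar> \<le> N"
      using reduced_bound[OF ns dg] g(2) gd by (simp add: reduced_def N_def)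
    then have "g \<in> B" using gd by (auto simp: B_def)
    moreover have "R `` {f} = R `` {g}"
      using equiv_class_eq[OF equiv_R] g(1) by (simp add: R_def)
    ultimately show "x \<in> (\<lambda>f. R `` {f}) ` B" using f by blast
  qed
  moreover have "finite B" by (simp add: B_def)
  ultimately show ?thesis by (meson finite_imageI finite_subset)
qed



section \<open>Conjugacy\<close>

lemma bc_refl: "braid_conj w w"
  unfolding braid_conj_def by (intro exI[of _ "[]"]) simp

lemma bc_sym: "braid_conj w v \<Longrightarrow> braid_conj v w"
  unfolding braid_conj_def
proof (elim exE)
  fix u assume a: "braid_eq w (u @ v @ inv_word u)"
  have "braid_eq (inv_word u @ w @ u) (inv_word u @ (u @ v @ inv_word u) @ u)"
    by (rule be_cong[OF a])
  also have "\<dots> = (inv_word u @ u) @ v @ (inv_word u @ u)" by simp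
  also have "braid_eq \<dots> ([] @ v @ (inv_word u @ u))" using be_cong[OF be_inv_left[of u], of "[]" "v @ inv_word u @ u"] by simp
  also have "braid_eq ([] @ v @ (inv_word u @ u)) ((v) @ [] @ [])"
    using be_cong[OF be_inv_left[of u], of v "[]"] by simp
  finally have "braid_eq v (inv_word u @ w @ inv_word (inv_word u))" by (simp add: be_sym)
  then show "\<exists>u. braid_eq v (u @ w @ inv_word u)" by blast
qed

lemma bc_trans: "braid_conj w v \<Longrightarrow> braid_conj v x \<Longrightarrow> braid_conj w x"
  unfolding braid_conj_def
proof (elim exE)
  fix u u' assume a: "braid_eq w (u @ v @ inv_word u)" and b: "braid_eq v (u' @ x @ inv_word u')"
  have "braid_eq (u @ v @ inv_word u) (u @ (u' @ x @ inv_word u') @ inv_word u)"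
    by (rule be_cong[OF b])
  then have "braid_eq w ((u @ u') @ x @ inv_word (u @ u'))" using a by (simp add: be_trans)
  then show "\<exists>u. braid_eq w (u @ x @ inv_word u)" by blast
qed

lemma conj_class_eq: "conj_class g = conj_class g' \<longleftrightarrow> braid_conj g g'"
proof
  assume "conj_class g = conj_class g'"
  moreover have "g \<in> conj_class g" by (simp add: conj_class_def bc_refl)
  ultimately show "braid_conj g g'" by (simp add: conj_class_def)
next
  assume a: "braid_conj g g'"
  show "conj_class g = conj_class g'"
    unfolding conj_class_def
  proof (rule set_eqI)
    fix w
    have "braid_conj w g \<Longrightarrow> braid_conj w g'" using bc_trans[OF _ a] by blast
    moreover have "braid_conj w g' \<Longrightarrow> braid_conj w g" using bc_trans[OF _ bc_sym[OF a]] by blast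
    ultimately show "w \<in> {w. braid_conj w g} \<longleftrightarrow> w \<in> {w. braid_conj w g'}" by blast
  qed
qed

lemma bc_eps: "braid_conj w v \<Longrightarrow> eps w = eps v"
  unfolding braid_conj_def by (auto dest!: be_eps)

lemma minv_minv[simp]: "minv (minv M) = M"
  by (cases M) (simp add: minv_def)

lemma mdet_minv: "mdet (minv M) = mdet M"
  by (cases M) (simp add: minv_def mdet_def algebra_simps)

lemma bij_aux:
  assumes "\<forall>x\<in>W. \<forall>y\<in>W. f x = f y \<longleftrightarrow> g x = g y"
  shows "bij_betw (\<lambda>C. g (SOME x. x \<in> W \<and> f x = C)) (f ` W) (g ` W)"
proof -
  define s where "s C = (SOME x. x \<in> W \<and> f x = C)" for C
  have s: "s (f x) \<in> W \<and> f (s (f x)) = f x" if "x \<in> W" for x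
    unfolding s_def by (rule someI[of _ x]) (simp add: that)
  show ?thesis unfolding s_def[symmetric] bij_betw_def
  proof
    show "inj_on (\<lambda>C. g (s C)) (f ` W)"
    proof (rule inj_onI)
      fix C1 C2 assume c1: "C1 \<in> f ` W" and c2: "C2 \<in> f ` W" and e: "g (s C1) = g (s C2)"
      obtain x1 where x1: "x1 \<in> W" "C1 = f x1" using c1 by blast
      obtain x2 where x2: "x2 \<in> W" "C2 = f x2" using c2 by blast
      have a1: "s (f x1) \<in> W" "f (s (f x1)) = f x1" using s[OF x1(1)] by auto
      have a2: "s (f x2) \<in> W" "f (s (f x2)) = f x2" using s[OF x2(1)] by auto
      have "f (s (f x1)) = f (s (f x2))" using assms a1(1) a2(1) e x1 x2 by blast
      then show "C1 = C2" using a1 a2 x1 x2 by simp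
    qed
    show "(\<lambda>C. g (s C)) ` f ` W = g ` W"
    proof
      show "(\<lambda>C. g (s C)) ` f ` W \<subseteq> g ` W" using s by auto
      show "g ` W \<subseteq> (\<lambda>C. g (s C)) ` f ` W"
      proof
        fix y assume "y \<in> g ` W"
        then obtain x where x: "x \<in> W" "y = g x" by blast
        have "s (f x) \<in> W" "f (s (f x)) = f x" using s[OF x(1)] by auto
        then have "g (s (f x)) = g x" using assms x(1) by blast
        then have "y = g (s (f x))" using x by simp
        moreover have "f x \<in> f ` W" using x by blast
        ultimately show "y \<in> (\<lambda>C. g (s C)) ` f ` W" by (rule rev_image_eqI[rotated])
      qed
    qed
  qed
qed

theorem lemma3p1:
  fixes t n :: int
  assumes "t \<noteq> 2" and "t \<noteq> -2"
  shows "finite (qf_classes (t^2 - 4)) \<and> (\<forall>j<12. finite (X t (n + int j))) \<and>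
         h t = (\<Sum>j<12. card (X t (n + int j)))"
proof -
  define D where "D = t^2 - 4"
  define R where "R = {(f :: bqf, g). qf_equiv f g}"
  define W where "W = {g. mtrace (phi g) = t \<and> n \<le> eps g \<and> eps g < n + 12}"
  define G where "G g = R `` {fm (phi g)}" for g
  have ns: "\<forall>s. D \<noteq> s^2" using nonsquare[OF assms] by (simp add: D_def)
  have fin: "finite (qf_classes D)" by (rule finite_classes[OF ns])
  have eqR: "equiv UNIV R" unfolding R_def by (rule equiv_R)
  have GW: "qf_classes D = G ` W"
  proof
    show "G ` W \<subseteq> qf_classes D"
    proof
      fix x assume "x \<in> G ` W"
      then obtain g where g: "g \<in> W" "x = G g" by blast
      have "disc (fm (phi g)) = D" using g(1) by (simp add: disc_fm mdet_phi W_def D_def)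
      then show "x \<in> qf_classes D" unfolding qf_classes_def g(2) G_def R_def
        by (intro quotientI) simp
    qed
  next
    show "qf_classes D \<subseteq> G ` W"
    proof
      fix x assume "x \<in> qf_classes D"
      then obtain f where f: "disc f = D" "x = R `` {f}"
        unfolding qf_classes_def R_def by (auto elim: quotientE)
      obtain a b c where fd: "f = (a, b, c)" by (cases f)
      have db: "b^2 - 4 * a * c = t^2 - 4" using f fd by (simp add: disc_def D_def)
      have tb: "(t - b) * (t + b) = t^2 - b^2" by (simp add: power2_eq_square algebra_simps)
      have "t^2 - b^2 = 2 * (2 - 2 * a * c)" using db by (simp add: algebra_simps)
      then have ev: "even ((t - b) * (t + b))" using tb by simp
      have "even (t - b)"
      proof (rule ccontr)
        assume o: "odd (t - b)"
        have "t + b = (t - b) + 2 * b" by simp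
        then have "odd (t + b)" using o by (metis even_add even_mult_iff even_numeral)
        then show False using o ev by simp
      qed
      then obtain r where r: "t - b = 2 * r" by (blast elim: evenE)
      define s where "s = r + b"
      have s: "t + b = 2 * s" using r by (simp add: s_def)
      have "(2 * r) * (2 * s) = t^2 - b^2" using r s tb by simp
      then have rs: "r * s + c * a = 1" using db by (simp add: algebra_simps)
      define M where "M = (r, -c, a, s)"
      have M: "mdet M = 1" "fm M = f" "mtrace M = t"
        using rs r s by (simp_all add: M_def mdet_def fm_def mtrace_def fd s_def algebra_simps)
      obtain w where w: "phi w = M" using phi_surj[OF M(1)] by blast
      define m where "m = (eps w - n) div 12"
      define w' where "w' = Z (- (2 * m)) @ w"
      have pw': "phi w' = M" by (simp add: w'_def phi_Z w msc_def mid_def[symmetric])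
      have dm: "eps w - n = 12 * m + (eps w - n) mod 12" by (simp add: m_def)
      have ew': "eps w' = n + (eps w - n) mod 12"
        using dm by (simp add: w'_def eps_Z)
      have "w' \<in> W" using pw' ew' M(3) by (simp add: W_def)
      moreover have "x = G w'" using f pw' M(2) by (simp add: G_def)
      ultimately show "x \<in> G ` W" by blast
    qed
  qed
  have key: "\<forall>g\<in>W. \<forall>g'\<in>W. conj_class g = conj_class g' \<longleftrightarrow> G g = G g'"
  proof (intro ballI)
    fix g g' assume g: "g \<in> W" and g': "g' \<in> W"
    have GG: "G g = G g' \<longleftrightarrow> qf_equiv (fm (phi g)) (fm (phi g'))"
      unfolding G_def using eq_equiv_class_iff[OF eqR] by (simp add: R_def)
    show "conj_class g = conj_class g' \<longleftrightarrow> G g = G g'"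
    proof
      assume "conj_class g = conj_class g'"
      then have "braid_conj g g'" by (simp add: conj_class_eq)
      then obtain u where u: "braid_eq g (u @ g' @ inv_word u)" unfolding braid_conj_def by blast
      define P where "P = phi u"
      have P1: "mdet P = 1" by (simp add: P_def mdet_phi)
      have pg: "phi g = mmult P (mmult (phi g') (minv P))"
        using be_phi[OF u] by (simp add: P_def phi_inv_word)
      have "act (minv P) (fm (phi g')) = fm (phi g)"
        by (simp add: act_fm pg)
      then have "qf_equiv (fm (phi g')) (fm (phi g))"
        unfolding qf_equiv_act using P1 mdet_minv by metis
      then show "G g = G g'" using GG qf_equiv_sym by blast
    next
      assume "G g = G g'"
      then have "qf_equiv (fm (phi g)) (fm (phi g'))" using GG by simp
      then obtain Q where Q: "mdet Q = 1" "fm (phi g') = act Q (fm (phi g))"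
        unfolding qf_equiv_act by blast
      have "fm (phi g') = fm (mmult (minv Q) (mmult (phi g) Q))" using Q by (simp add: act_fm)
      moreover have "mtrace (phi g') = mtrace (mmult (minv Q) (mmult (phi g) Q))"
        using g g' mtrace_conj[OF Q(1)] by (simp add: W_def)
      ultimately have pg': "phi g' = mmult (minv Q) (mmult (phi g) Q)" by (rule fm_inj)
      obtain u where u: "phi u = minv Q" using phi_surj mdet_minv Q(1) by metis
      have ph: "phi (u @ g @ inv_word u) = phi g'" using pg' u by (simp add: phi_inv_word)
      have ee: "eps (u @ g @ inv_word u) = eps g" by simp
      have "12 dvd (eps g - eps g')" using phi_eq[OF ph] ee by simp
      moreover have "\<bar>eps g - eps g'\<bar> < 12"
      proof -
        have "n \<le> eps g" "eps g < n + 12" "n \<le> eps g'" "eps g' < n + 12" using g g' by (simp_all add: W_def)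
        then show ?thesis by arith
      qed
      ultimately have "eps g = eps g'"
      proof -
        assume "12 dvd (eps g - eps g')" "\<bar>eps g - eps g'\<bar> < 12"
        then obtain k where k: "eps g - eps g' = 12 * k" "\<bar>12 * k\<bar> < 12" by (auto elim!: dvdE)
        then have "k = 0" by arith
        then show ?thesis using k by simp
      qed
      then have "braid_eq (u @ g @ inv_word u) g'" using phi_eq[OF ph] ee by simp
      then have "braid_conj g' g" unfolding braid_conj_def by (blast intro: be_sym)
      then show "conj_class g = conj_class g'" using conj_class_eq bc_sym by blast
    qed
  qed
  have bij: "bij_betw (\<lambda>C. G (SOME x. x \<in> W \<and> conj_class x = C)) (conj_class ` W) (G ` W)"
    by (rule bij_aux[OF key])
  have finC: "finite (conj_class ` W)" using bij_betw_finite[OF bij] fin GW by simp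
  have cardC: "card (conj_class ` W) = card (qf_classes D)" using bij_betw_same_card[OF bij] GW by simp
  have UX: "(\<Union>j<12. X t (n + int j)) = conj_class ` W"
  proof
    show "(\<Union>j<12. X t (n + int j)) \<subseteq> conj_class ` W"
      by (auto simp: X_def W_def)
    show "conj_class ` W \<subseteq> (\<Union>j<12. X t (n + int j))"
    proof
      fix C assume "C \<in> conj_class ` W"
      then obtain g where g: "g \<in> W" "C = conj_class g" by blast
      define j where "j = nat (eps g - n)"
      have "j < 12" "eps g = n + int j" using g by (auto simp: j_def W_def)
      then show "C \<in> (\<Union>j<12. X t (n + int j))" using g by (auto simp: X_def W_def)
    qed
  qed
  have finX: "\<forall>j<12. finite (X t (n + int j))"
  proof (intro allI impI)
    fix j :: nat assume "j < 12"
    then have "X t (n + int j) \<subseteq> (\<Union>j<12. X t (n + int j))" by blast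
    then show "finite (X t (n + int j))" using finC UX finite_subset by metis
  qed
  have disj: "\<forall>i\<in>{..<12::nat}. \<forall>j\<in>{..<12}. i \<noteq> j \<longrightarrow> X t (n + int i) \<inter> X t (n + int j) = {}"
  proof (intro ballI impI)
    fix i j :: nat assume "i \<noteq> j"
    show "X t (n + int i) \<inter> X t (n + int j) = {}"
    proof (rule ccontr)
      assume "X t (n + int i) \<inter> X t (n + int j) \<noteq> {}"
      then obtain g g' where "conj_class g = conj_class g'" "eps g = n + int i" "eps g' = n + int j"
        by (auto simp: X_def)
      then show False using \<open>i \<noteq> j\<close> bc_eps conj_class_eq by fastforce
    qed
  qed
  have "card (\<Union>j<12. X t (n + int j)) = (\<Sum>j<12. card (X t (n + int j)))"
    by (rule card_UN_disjoint) (use finX disj in auto)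
  then have "h t = (\<Sum>j<12. card (X t (n + int j)))"
    using UX cardC by (simp add: h_def D_def)
  then show ?thesis using fin finX by (simp add: D_def)
qed

end
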